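(* Every universal totally positive diagonal quadratic form over $\mathcal{O}_K$ has at least $M_D/s$ variables if $s$ is even and at least $M_D/(2s)$ variables if $s$ is odd.
   Context: $D>1$ squarefree, $K=\mathbb{Q}(\sqrt D)$, $\mathcal{O}_K$ its ring of integers. A totally positive diagonal form is $a_1x_1^2+\dots+a_mx_m^2$ with $a_i\in\mathcal{O}_K$ totally positive (positive together with their conjugates); it is universal if it represents every totally positive element of $\mathcal{O}_K$ with $x_i\in\mathcal{O}_K$. $\omega_D=\sqrt D$ if $D\equiv2,3\pmod4$, $\omega_D=\frac{1+\sqrt D}2$ if $D\equiv1\pmod4$, with continued fraction $\omega_D=[u_0;\overline{u_1,\dots,u_s}]$, $s$ minimal period. $M_D=u_1+u_3+\dots+u_{s-1}$ if $s$ is even; $M_D=2u_0+u_1+\dots+u_{s-1}$ if $s$ odd and $D\equiv2,3\pmod4$; $M_D=2u_0+u_1+\dots+u_{s-1}-1$ if $s$ odd and $D\equiv1\pmod4$. *)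

theory Defs
  imports Complex_Main "HOL-Computational_Algebra.Squarefree"
begin

definition omega :: "nat \<Rightarrow> real" where
  "omega D = (if D mod 4 = 1 then (1 + sqrt (real D)) / 2 else sqrt (real D))"

definition omega_conj :: "nat \<Rightarrow> real" where
  "omega_conj D = (if D mod 4 = 1 then (1 - sqrt (real D)) / 2 else - sqrt (real D))"

definition OK :: "nat \<Rightarrow> real set" where
  "OK D = {of_int a + of_int b * omega D | a b. True}"

text \<open>Totally positive element of O_K: it and its conjugate are positive
  (the representation a + b omega is unique since sqrt D is irrational).\<close>
definition totally_positive :: "nat \<Rightarrow> real \<Rightarrow> bool" where
  "totally_positive D x \<longleftrightarrow> (\<exists>a b::int. x = of_int a + of_int b * omega D
       \<and> of_int a + of_int b * omega D > 0 \<and> of_int a + of_int b * omega_conj D > 0)"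

definition universal_diag_form :: "nat \<Rightarrow> nat \<Rightarrow> (nat \<Rightarrow> real) \<Rightarrow> bool" where
  "universal_diag_form D m a \<longleftrightarrow>
     (\<forall>i<m. a i \<in> OK D \<and> totally_positive D (a i)) \<and>
     (\<forall>\<alpha>. \<alpha> \<in> OK D \<and> totally_positive D \<alpha> \<longrightarrow>
        (\<exists>x :: nat \<Rightarrow> real. (\<forall>i<m. x i \<in> OK D) \<and> \<alpha> = (\<Sum>i<m. a i * (x i)\<^sup>2)))"

fun cf_rem :: "real \<Rightarrow> nat \<Rightarrow> real" where
  "cf_rem x 0 = x"
| "cf_rem x (Suc n) = 1 / frac (cf_rem x n)"

definition cf :: "real \<Rightarrow> nat \<Rightarrow> int" where
  "cf x n = \<lfloor>cf_rem x n\<rfloor>"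

definition u :: "nat \<Rightarrow> nat \<Rightarrow> int" where
  "u D n = cf (omega D) n"

definition period :: "nat \<Rightarrow> nat" where
  "period D = (LEAST s. s > 0 \<and> (\<forall>n\<ge>1. u D (n + s) = u D n))"

definition M :: "nat \<Rightarrow> int" where
  "M D = (let s = period D in
     if even s then (\<Sum>j<s div 2. u D (2 * j + 1))
     else if D mod 4 = 1 then 2 * u D 0 + (\<Sum>i\<in>{1..<s}. u D i) - 1
     else 2 * u D 0 + (\<Sum>i\<in>{1..<s}. u D i))"

end

theory Submission
  imports Defs
begin

lemma sqrtD_irr:
  assumes "D > 1" "squarefree D"
  shows "sqrt (real D) \<notin> \<rat>"
proof
  assume "sqrt (real D) \<in> \<rat>"
  then obtain p n :: nat where n: "n \<noteq> 0" and sq: "\<bar>sqrt (real D)\<bar> = p / n" and cop: "coprime p n"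
    by (rule Rats_abs_nat_div_natE)
  have "real p = sqrt (real D) * n" using n sq by (simp add: field_simps)
  then have "real (p^2) = real (D * n^2)" by (simp add: power_mult_distrib)
  then have eq: "p^2 = D * n^2" by (simp only: of_nat_eq_iff)
  have "n^2 dvd p^2" using eq by simp
  moreover have "coprime (n^2) (p^2)" using cop by (simp add: coprime_commute)
  ultimately have "n^2 dvd 1" using coprime_common_divisor[of "n^2" "p^2" "n^2"] by simp
  then have "n = 1" by simp
  with eq have "p^2 = D" by simp
  then have "p dvd 1" using assms(2) squarefreeD[of D p] by simp
  then have "p = 1" by simp
  with \<open>p^2 = D\<close> assms(1) show False by simp
qed


definition cc :: "nat \<Rightarrow> int" where "cc D = (if D mod 4 = 1 then 1 else 0)"
definition NN :: "nat \<Rightarrow> int" where "NN D = (if D mod 4 = 1 then (int D - 1) div 4 else int D)"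

lemma om_sum: "omega D + omega_conj D = of_int (cc D)"
  by (simp add: omega_def omega_conj_def cc_def field_simps)

lemma om_sq: "(omega D)^2 = of_int (cc D) * omega D + of_int (NN D)"
proof (cases "D mod 4 = 1")
  case True
  then have "4 dvd (int D - 1)" by presburger
  then obtain k where k: "int D - 1 = 4 * k" by (elim dvdE)
  then have "(int D - 1) div 4 = k" by simp
  moreover have "real D - 1 = 4 * real_of_int k" using k
    by (metis of_int_1 of_int_diff of_int_mult of_int_numeral of_int_of_nat_eq)
  ultimately have "real_of_int ((int D - 1) div 4) = (real D - 1) / 4" by simp
  with True show ?thesis by (simp add: omega_def cc_def NN_def power2_eq_square field_simps)
next
  case False
  then show ?thesis by (simp add: omega_def cc_def NN_def)
qed

lemma omc_sq: "(omega_conj D)^2 = of_int (cc D) * omega_conj D + of_int (NN D)"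
proof (cases "D mod 4 = 1")
  case True
  then have "4 dvd (int D - 1)" by presburger
  then obtain k where k: "int D - 1 = 4 * k" by (elim dvdE)
  then have "(int D - 1) div 4 = k" by simp
  moreover have "real D - 1 = 4 * real_of_int k" using k
    by (metis of_int_1 of_int_diff of_int_mult of_int_numeral of_int_of_nat_eq)
  ultimately have "real_of_int ((int D - 1) div 4) = (real D - 1) / 4" by simp
  with True show ?thesis by (simp add: omega_conj_def cc_def NN_def power2_eq_square field_simps)
next
  case False
  then show ?thesis by (simp add: omega_conj_def cc_def NN_def)
qed

lemma omega_irr: assumes "D > 1" "squarefree D" shows "omega D \<notin> \<rat>"
proof
  assume h: "omega D \<in> \<rat>"
  have "sqrt (real D) = (if D mod 4 = 1 then 2 * omega D - 1 else omega D)"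
    by (simp add: omega_def field_simps)
  then have "sqrt (real D) \<in> \<rat>" using h by auto
  with sqrtD_irr[OF assms] show False by simp
qed

lemma omegac_irr: assumes "D > 1" "squarefree D" shows "omega_conj D \<notin> \<rat>"
proof
  assume h: "omega_conj D \<in> \<rat>"
  have "omega D = of_int (cc D) - omega_conj D" using om_sum[of D] by simp
  then have "omega D \<in> \<rat>" using h by auto
  with omega_irr[OF assms] show False by simp
qed

lemma omega_gt1: assumes "D > 1" shows "omega D > 1"
proof -
  have "sqrt (real D) > 1" using assms by simp
  moreover have "D mod 4 = 1 \<Longrightarrow> D \<ge> 5" using assms by presburger
  moreover have "D \<ge> 5 \<Longrightarrow> sqrt (real D) > 2"
  proof -
    assume "D \<ge> 5"
    then have "(2::real)^2 < real D" by simp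
    then show ?thesis using real_less_rsqrt by blast
  qed
  ultimately show ?thesis by (auto simp: omega_def)
qed

lemma omegac_neg: assumes "D > 1" shows "omega_conj D < 0"
  using assms by (simp add: omega_conj_def)


locale qf =
  fixes D :: nat
  assumes D1: "D > 1" and sqf: "squarefree D"
begin

abbreviation "w \<equiv> omega D"
abbreviation "w' \<equiv> omega_conj D"

lemma rep_unique:
  assumes "of_int a + of_int b * w = of_int a' + of_int b' * w"
  shows "a = a' \<and> b = b'"
proof (cases "b = b'")
  case True then show ?thesis using assms by simp
next
  case False
  then have "w = of_int (a - a') / of_int (b' - b)" using assms
    by (simp add: field_simps)
  then have "w \<in> \<rat>" by simp
  with omega_irr[OF D1 sqf] show ?thesis by simp
qed

definition cj :: "real \<Rightarrow> real" where
  "cj x = (SOME y. \<exists>a b. x = of_int a + of_int b * w \<and> y = of_int a + of_int b * w')"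

lemma cj_eq [simp]: "cj (of_int a + of_int b * w) = of_int a + of_int b * w'"
proof -
  let ?P = "\<lambda>y. \<exists>a' b'. of_int a + of_int b * w = of_int a' + of_int b' * w \<and> y = of_int a' + of_int b' * w'"
  have "?P (of_int a + of_int b * w')" by blast
  then have "?P (cj (of_int a + of_int b * w))" unfolding cj_def by (rule someI)
  then obtain a' b' where "of_int a + of_int b * w = of_int a' + of_int b' * w"
    and "cj (of_int a + of_int b * w) = of_int a' + of_int b' * w'" by blast
  with rep_unique show ?thesis by blast
qed

lemma OK_iff: "x \<in> OK D \<longleftrightarrow> (\<exists>a b. x = of_int a + of_int b * w)"
  by (auto simp: OK_def)

lemma OKE: assumes "x \<in> OK D" obtains a b where "x = of_int a + of_int b * w"
  using assms by (auto simp: OK_def)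

lemma OK_add: "x \<in> OK D \<Longrightarrow> y \<in> OK D \<Longrightarrow> x + y \<in> OK D"
proof -
  assume "x \<in> OK D" "y \<in> OK D"
  then obtain a b c d where "x = of_int a + of_int b * w" "y = of_int c + of_int d * w" by (meson OKE)
  then have "x + y = of_int (a + c) + of_int (b + d) * w" by (simp add: algebra_simps)
  then show ?thesis unfolding OK_iff by blast
qed

lemma OK_minus: "x \<in> OK D \<Longrightarrow> - x \<in> OK D"
proof -
  assume "x \<in> OK D"
  then obtain a b where "x = of_int a + of_int b * w" by (meson OKE)
  then have "- x = of_int (- a) + of_int (- b) * w" by (simp add: algebra_simps)
  then show ?thesis unfolding OK_iff by blast
qed

lemma OK_diff: "x \<in> OK D \<Longrightarrow> y \<in> OK D \<Longrightarrow> x - y \<in> OK D"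
  using OK_add OK_minus by (metis diff_conv_add_uminus)

lemma OK_int: "of_int k \<in> OK D"
  unfolding OK_iff by (rule exI[of _ k], rule exI[of _ 0]) simp

lemma OK_w: "w \<in> OK D"
  unfolding OK_iff by (rule exI[of _ 0], rule exI[of _ 1]) simp

lemma mult_form: "(of_int a + of_int b * w) * (of_int c + of_int d * w) =
   of_int (a*c + b*d*NN D) + of_int (a*d + b*c + b*d*cc D) * w"
proof -
  have "(of_int a + of_int b * w) * (of_int c + of_int d * w) =
    of_int (a*c) + of_int (a*d + b*c) * w + of_int (b*d) * w^2"
    by (simp add: algebra_simps power2_eq_square)
  also have "\<dots> = of_int (a*c + b*d*NN D) + of_int (a*d + b*c + b*d*cc D) * w"
    by (simp add: om_sq algebra_simps)
  finally show ?thesis .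
qed

lemma mult_formc: "(of_int a + of_int b * w') * (of_int c + of_int d * w') =
   of_int (a*c + b*d*NN D) + of_int (a*d + b*c + b*d*cc D) * w'"
proof -
  have "(of_int a + of_int b * w') * (of_int c + of_int d * w') =
    of_int (a*c) + of_int (a*d + b*c) * w' + of_int (b*d) * w'^2"
    by (simp add: algebra_simps power2_eq_square)
  also have "\<dots> = of_int (a*c + b*d*NN D) + of_int (a*d + b*c + b*d*cc D) * w'"
    by (simp add: omc_sq algebra_simps)
  finally show ?thesis .
qed

lemma OK_mult: "x \<in> OK D \<Longrightarrow> y \<in> OK D \<Longrightarrow> x * y \<in> OK D"
  unfolding OK_iff using mult_form by blast

lemma cj_add: "x \<in> OK D \<Longrightarrow> y \<in> OK D \<Longrightarrow> cj (x + y) = cj x + cj y"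
proof -
  assume "x \<in> OK D" "y \<in> OK D"
  then obtain a b c d where "x = of_int a + of_int b * w" "y = of_int c + of_int d * w" by (meson OKE)
  moreover have e: "x + y = of_int (a + c) + of_int (b + d) * w" using calculation by (simp add: algebra_simps)
  ultimately show ?thesis by (simp only: e cj_eq) (simp add: algebra_simps)
qed

lemma cj_minus: "x \<in> OK D \<Longrightarrow> cj (- x) = - cj x"
proof -
  assume "x \<in> OK D"
  then obtain a b where "x = of_int a + of_int b * w" by (meson OKE)
  moreover have e: "- x = of_int (- a) + of_int (- b) * w" using calculation by (simp add: algebra_simps)
  ultimately show ?thesis by (simp only: e cj_eq)
qed

lemma cj_diff: "x \<in> OK D \<Longrightarrow> y \<in> OK D \<Longrightarrow> cj (x - y) = cj x - cj y"
  using cj_add[of x "-y"] cj_minus[of y] OK_minus[of y] by simp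

lemma cj_mult: "x \<in> OK D \<Longrightarrow> y \<in> OK D \<Longrightarrow> cj (x * y) = cj x * cj y"
proof -
  assume "x \<in> OK D" "y \<in> OK D"
  then obtain a b c d where "x = of_int a + of_int b * w" "y = of_int c + of_int d * w" by (meson OKE)
  then show ?thesis by (simp only: mult_form mult_formc cj_eq)?
qed

lemma cj_int [simp]: "cj (of_int k) = of_int k"
  using cj_eq[of k 0] by simp

lemma cj_w [simp]: "cj w = w'"
  using cj_eq[of 0 1] by simp

lemma cj_zero: "x \<in> OK D \<Longrightarrow> cj x = 0 \<Longrightarrow> x = 0"
proof -
  assume "x \<in> OK D" "cj x = 0"
  then obtain a b where x: "x = of_int a + of_int b * w" by (meson OKE)
  with \<open>cj x = 0\<close> have h: "of_int a + of_int b * w' = 0" by simp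
  have "b = 0"
  proof (rule ccontr)
    assume "b \<noteq> 0"
    then have "w' = - of_int a / of_int b" using h by (simp add: field_simps)
    then have "w' \<in> \<rat>" by simp
    with omegac_irr[OF D1 sqf] show False by simp
  qed
  with h x show ?thesis by simp
qed

lemma tp_iff: "totally_positive D x \<longleftrightarrow> x \<in> OK D \<and> x > 0 \<and> cj x > 0"
  unfolding totally_positive_def OK_iff by force

lemma OK_sum: "(\<And>i. i \<in> A \<Longrightarrow> f i \<in> OK D) \<Longrightarrow> sum f A \<in> OK D"
  by (induction A rule: infinite_finite_induct) (auto simp: OK_add OK_int[of 0, simplified])

lemma cj_sum: "(\<And>i. i \<in> A \<Longrightarrow> f i \<in> OK D) \<Longrightarrow> cj (sum f A) = (\<Sum>i\<in>A. cj (f i))"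
proof (induction A rule: infinite_finite_induct)
  case (infinite A) then show ?case using cj_int[of 0] by simp
next
  case empty then show ?case using cj_int[of 0] by simp
next
  case (insert x F)
  then show ?case by (simp add: cj_add OK_sum)
qed

lemma cj_lin: "b1 \<in> OK D \<Longrightarrow> b2 \<in> OK D \<Longrightarrow>
   cj (of_int x * b1 + of_int y * b2) = of_int x * cj b1 + of_int y * cj b2"
  by (simp add: cj_add cj_mult OK_mult OK_int)

end


context qf begin

definition good_basis :: "real \<Rightarrow> real \<Rightarrow> bool" where
  "good_basis b1 b2 \<longleftrightarrow> b1 \<in> OK D \<and> b2 \<in> OK D \<and> b1 > 0 \<and> b2 > 0 \<and> cj b1 > 0 \<and> cj b2 < 0 \<and>
     (\<forall>z\<in>OK D. \<exists>x y. z = of_int x * b1 + of_int y * b2)"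

lemma coord_x:
  assumes gb: "good_basis b1 b2" and z: "z = of_int x * b1 + of_int y * b2" and "z > 0" "cj z > 0"
  shows "x \<ge> 1"
proof (rule ccontr)
  assume "\<not> x \<ge> 1"
  then have x0: "real_of_int x \<le> 0" by simp
  from gb have b: "b1 \<in> OK D" "b2 \<in> OK D" "b1 > 0" "b2 > 0" "cj b1 > 0" "cj b2 < 0"
    unfolding good_basis_def by auto
  have "cj z = of_int x * cj b1 + of_int y * cj b2" using z cj_lin b by simp
  with \<open>cj z > 0\<close> have "of_int x * cj b1 + of_int y * cj b2 > 0" by simp
  moreover have "of_int x * cj b1 \<le> 0" using x0 b(5) by (simp add: mult_nonpos_nonneg)
  ultimately have "of_int y * cj b2 > 0" by linarith
  then have "real_of_int y < 0" using b(6) by (simp add: zero_less_mult_iff)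
  then have "of_int y * b2 < 0" using b(4) by (simp add: mult_neg_pos)
  moreover have "of_int x * b1 \<le> 0" using x0 b(3) by (simp add: mult_nonpos_nonneg)
  ultimately show False using z \<open>z > 0\<close> by linarith
qed

lemma coord_unique:
  assumes gb: "good_basis b1 b2"
    and e: "of_int x * b1 + of_int y * b2 = of_int x' * b1 + of_int y' * b2"
  shows "x = x' \<and> y = y'"
proof -
  from gb have b: "b1 \<in> OK D" "b2 \<in> OK D" "b1 > 0" "b2 > 0" "cj b1 > 0" "cj b2 < 0"
    unfolding good_basis_def by auto
  have e2: "of_int x * cj b1 + of_int y * cj b2 = of_int x' * cj b1 + of_int y' * cj b2"
    using arg_cong[OF e, of cj] cj_lin b by simp
  define d where "d = real_of_int (x - x')"
  define f where "f = real_of_int (y' - y)"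
  have 1: "d * b1 = f * b2" using e by (simp add: d_def f_def algebra_simps)
  have 2: "d * cj b1 = f * cj b2" using e2 by (simp add: d_def f_def algebra_simps)
  have "d * (b1 * cj b2 - cj b1 * b2) = 0"
    using 1 2 by (simp add: algebra_simps)
  moreover have "b1 * cj b2 - cj b1 * b2 < 0"
    using b by (smt (verit) mult_pos_neg mult_pos_pos)
  ultimately have "d = 0" by simp
  then have "x = x'" by (simp add: d_def)
  then have "f * b2 = 0" using 1 by (simp add: d_def)
  then have "y = y'" using b(4) by (simp add: f_def)
  with \<open>x = x'\<close> show ?thesis by simp
qed

lemma sq_OK: "a \<in> OK D \<Longrightarrow> x \<in> OK D \<Longrightarrow> a * x^2 \<in> OK D"
  by (simp add: power2_eq_square OK_mult)

lemma cj_sq: "a \<in> OK D \<Longrightarrow> x \<in> OK D \<Longrightarrow> cj (a * x^2) = cj a * (cj x)^2"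
  by (simp add: power2_eq_square OK_mult cj_mult)

lemma indecomp:
  fixes m :: nat and a x :: "nat \<Rightarrow> real"
  assumes gb: "good_basis b1 b2"
    and a: "\<forall>i<m. a i \<in> OK D \<and> a i > 0 \<and> cj (a i) > 0" and x: "\<forall>i<m. x i \<in> OK D"
    and z: "z = b1 + of_int y * b2" and zs: "z = (\<Sum>i<m. a i * (x i)^2)" and zpos: "z > 0"
  shows "\<exists>j<m. z = a j * (x j)^2"
proof -
  define t where "t i = a i * (x i)^2" for i
  have tOK: "t i \<in> OK D" if "i < m" for i using a x that by (simp add: t_def sq_OK)
  have tnn: "t i \<ge> 0" if "i < m" for i using a that by (simp add: t_def less_imp_le)
  have cjt: "cj (t i) = cj (a i) * (cj (x i))^2" if "i < m" for i using a x that by (simp add: t_def cj_sq)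
  have ctnn: "cj (t i) \<ge> 0" if "i < m" for i using a that cjt by (simp add: less_imp_le)
  have tpos: "cj (t i) > 0" if "i < m" "t i \<noteq> 0" for i
  proof -
    have "x i \<noteq> 0" using that by (auto simp: t_def)
    then have "cj (x i) \<noteq> 0" using cj_zero x that by blast
    then show ?thesis using cjt[OF that(1)] a that(1) by simp
  qed
  have zt: "z = sum t {..<m}" using zs by (simp add: t_def)
  obtain j where j: "j < m" "t j \<noteq> 0"
  proof (rule ccontr)
    assume "\<not> thesis"
    then have "\<forall>j<m. t j = 0" using that by blast
    then have "sum t {..<m} = 0" by simp
    with zt zpos show False by simp
  qed
  define R where "R = sum t ({..<m} - {j})"
  have zR: "z = t j + R" unfolding zt R_def by (rule sum.remove) (use j in auto)
  show ?thesis
  proof (cases "R = 0")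
    case True
    then show ?thesis using zR j by (auto simp: t_def)
  next
    case False
    have ROK: "R \<in> OK D" unfolding R_def by (rule OK_sum) (use tOK in auto)
    have Rnn: "R \<ge> 0" unfolding R_def by (rule sum_nonneg) (use tnn in auto)
    with False have Rpos: "R > 0" by simp
    obtain i where i: "i \<in> {..<m} - {j}" "t i \<noteq> 0"
    proof (rule ccontr)
      assume "\<not> thesis"
      then have "\<forall>i\<in>{..<m} - {j}. t i = 0" using that by blast
      then have "R = 0" unfolding R_def by simp
      with False show False by simp
    qed
    have cR: "cj R = (\<Sum>k\<in>{..<m} - {j}. cj (t k))" unfolding R_def by (rule cj_sum) (use tOK in auto)
    have "cj (t i) \<le> (\<Sum>k\<in>{..<m} - {j}. cj (t k))"
      by (rule member_le_sum) (use i ctnn in auto)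
    moreover have "cj (t i) > 0" using tpos i by auto
    ultimately have cRpos: "cj R > 0" using cR by simp
    have tjOK: "t j \<in> OK D" using tOK j by simp
    from gb tjOK obtain x1 y1 where e1: "t j = of_int x1 * b1 + of_int y1 * b2" unfolding good_basis_def by blast
    from gb ROK obtain x2 y2 where e2: "R = of_int x2 * b1 + of_int y2 * b2" unfolding good_basis_def by blast
    have tjpos: "t j > 0" using tnn[OF j(1)] j(2) by simp
    have "x1 \<ge> 1" using coord_x[OF gb e1 tjpos tpos[OF j]] .
    moreover have "x2 \<ge> 1" using coord_x[OF gb e2 Rpos cRpos] .
    moreover have "of_int (x1 + x2) * b1 + of_int (y1 + y2) * b2 = of_int 1 * b1 + of_int y * b2"
      using zR z e1 e2 by (simp add: algebra_simps)
    then have "x1 + x2 = 1" using coord_unique[OF gb] by blast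
    ultimately show ?thesis by simp
  qed
qed


lemma gbD: assumes "good_basis b1 b2"
  shows "b1 \<in> OK D" "b2 \<in> OK D" "b1 > 0" "b2 > 0" "cj b1 > 0" "cj b2 < 0"
    "z \<in> OK D \<Longrightarrow> \<exists>x y. z = of_int x * b1 + of_int y * b2"
  using assms unfolding good_basis_def by auto

lemma pair_sum:
  assumes gb: "good_basis b1 b2" and aOK: "aa \<in> OK D" and xv: "x \<in> OK D" "v \<in> OK D"
    and zy: "b1 + of_int y * b2 = aa * x^2" and zw: "b1 + of_int y' * b2 = aa * v^2"
    and tp1: "b1 + of_int y * b2 > 0" "cj (b1 + of_int y * b2) > 0"
    and tp2: "b1 + of_int y' * b2 > 0" "cj (b1 + of_int y' * b2) > 0"
    and ne: "y \<noteq> y'"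
  shows "of_int (y + y') = - (b1 / b2 + cj b1 / cj b2)"
proof -
  note b = gbD[OF gb]
  define Z where "Z = b1 + of_int y * b2"
  define W where "W = b1 + of_int y' * b2"
  have ZOK: "Z \<in> OK D" unfolding Z_def using b by (simp add: OK_add OK_mult OK_int)
  have WOK: "W \<in> OK D" unfolding W_def using b by (simp add: OK_add OK_mult OK_int)
  have cZ: "cj Z = cj b1 + of_int y * cj b2" using cj_lin[OF b(1,2), of 1 y] by (simp add: Z_def)
  have cW: "cj W = cj b1 + of_int y' * cj b2" using cj_lin[OF b(1,2), of 1 y'] by (simp add: W_def)
  define \<gamma> where "\<gamma> = aa * x * v"
  have gOK: "\<gamma> \<in> OK D" unfolding \<gamma>_def using aOK xv by (simp add: OK_mult)
  have g2: "\<gamma> * \<gamma> = Z * W" unfolding \<gamma>_def Z_def W_def zy zw by (simp add: power2_eq_square algebra_simps)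
  define g where "g = \<bar>\<gamma>\<bar>"
  have gOK': "g \<in> OK D" unfolding g_def using gOK OK_minus by (simp add: abs_if)
  have gg: "g * g = Z * W" unfolding g_def using g2 by (simp add: abs_mult_self_eq)
  have Zp: "Z > 0" and Wp: "W > 0" using tp1 tp2 by (simp_all add: Z_def W_def)
  have cZp: "cj Z > 0" and cWp: "cj W > 0" using tp1 tp2 by (simp_all add: Z_def W_def)
  have gp: "g \<ge> 0" unfolding g_def by simp
  have cgg: "cj g * cj g = cj Z * cj W"
    using arg_cong[OF gg, of cj] cj_mult gOK' ZOK WOK by simp
  define d1 where "d1 = Z + W - (g + g)"
  define d2 where "d2 = Z + W + (g + g)"
  have d1OK: "d1 \<in> OK D" unfolding d1_def using ZOK WOK gOK' by (intro OK_diff OK_add)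
  have d2OK: "d2 \<in> OK D" unfolding d2_def using ZOK WOK gOK' by (intro OK_add)
  have cd1: "cj d1 = cj Z + cj W - 2 * cj g" unfolding d1_def using ZOK WOK gOK'
    by (simp only: OK_add cj_add cj_diff mult_2)
  have cd2: "cj d2 = cj Z + cj W + 2 * cj g" unfolding d2_def using ZOK WOK gOK'
    by (simp only: OK_add cj_add mult_2)
  have ZW: "Z - W = of_int (y - y') * b2" by (simp add: Z_def W_def algebra_simps)
  have cZW: "cj Z - cj W = of_int (y - y') * cj b2" by (simp add: cZ cW algebra_simps)
  have yy: "real_of_int (y - y') \<noteq> 0" using ne by simp
  have d2p: "d2 > 0" unfolding d2_def using Zp Wp gp by simp
  have "d1 * d2 = (Z - W)^2" unfolding d1_def d2_def using gg by (simp add: power2_eq_square algebra_simps)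
  also have "\<dots> > 0" using ZW yy b(4) by simp
  finally have d1p: "d1 > 0" using d2p by (simp add: zero_less_mult_iff)
  have "cj d1 * cj d2 = (cj Z - cj W)^2" unfolding cd1 cd2 using cgg by (simp add: power2_eq_square algebra_simps)
  also have "\<dots> > 0" using cZW yy b(6) by simp
  finally have cprod: "cj d1 * cj d2 > 0" .
  have "cj d1 + cj d2 > 0" unfolding cd1 cd2 using cZp cWp by simp
  with cprod have cd1p: "cj d1 > 0" and cd2p: "cj d2 > 0"
    by (smt (verit) mult_nonpos_nonpos zero_less_mult_iff)+
  obtain e f where gef: "g = of_int e * b1 + of_int f * b2" using b(7)[OF gOK'] by blast
  have "d1 = of_int (2 - 2*e) * b1 + of_int (y + y' - 2*f) * b2"
    unfolding d1_def Z_def W_def gef by (simp add: algebra_simps)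
  from coord_x[OF gb this d1p cd1p] have "2 - 2*e \<ge> 1" .
  moreover have "d2 = of_int (2 + 2*e) * b1 + of_int (y + y' + 2*f) * b2"
    unfolding d2_def Z_def W_def gef by (simp add: algebra_simps)
  from coord_x[OF gb this d2p cd2p] have "2 + 2*e \<ge> 1" .
  ultimately have e0: "e = 0" by simp
  have gf: "g = of_int f * b2" using gef e0 by simp
  have cgf: "cj g = of_int f * cj b2" using gf b(2) by (simp add: cj_mult OK_int)
  define r where "r = b1 / b2"
  define r' where "r' = cj b1 / cj b2"
  have b2n: "b2 \<noteq> 0" and cb2n: "cj b2 \<noteq> 0" using b by auto
  have Zr: "Z = b2 * (r + of_int y)" unfolding Z_def r_def using b2n by (simp add: field_simps)
  have Wr: "W = b2 * (r + of_int y')" unfolding W_def r_def using b2n by (simp add: field_simps)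
  have cZr: "cj Z = cj b2 * (r' + of_int y)" unfolding cZ r'_def using cb2n by (simp add: field_simps)
  have cWr: "cj W = cj b2 * (r' + of_int y')" unfolding cW r'_def using cb2n by (simp add: field_simps)
  have "b2 * b2 * ((r + of_int y) * (r + of_int y')) = b2 * b2 * (of_int f * of_int f)"
    using gg unfolding gf Zr Wr by (simp add: algebra_simps)
  then have E1: "(r + of_int y) * (r + of_int y') = of_int f * of_int f" using b2n by simp
  have "cj b2 * cj b2 * ((r' + of_int y) * (r' + of_int y')) = cj b2 * cj b2 * (of_int f * of_int f)"
    using cgg unfolding cgf cZr cWr by (simp add: algebra_simps)
  then have E2: "(r' + of_int y) * (r' + of_int y') = of_int f * of_int f" using cb2n by simp
  have "(r - r') * (r + r' + of_int y + of_int y') = 0" using E1 E2 by (simp add: algebra_simps)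
  moreover have "r > 0" unfolding r_def using b by simp
  moreover have "r' < 0" unfolding r'_def using b by (simp add: divide_pos_neg)
  ultimately have "r + r' + of_int y + of_int y' = 0" by simp
  then show ?thesis by (simp add: r_def r'_def)
qed


lemma family_bound:
  fixes m N :: nat and a :: "nat \<Rightarrow> real"
  assumes gb: "good_basis b1 b2" and univ: "universal_diag_form D m a"
    and cpos: "\<forall>y\<le>N. cj (b1 + of_nat y * b2) > 0"
  shows "N + 1 \<le> 2 * m"
proof -
  note b = gbD[OF gb]
  have aprop: "\<forall>i<m. a i \<in> OK D \<and> a i > 0 \<and> cj (a i) > 0"
    using univ unfolding universal_diag_form_def tp_iff by blast
  define Y where "Y j = {y. y \<le> N \<and> (\<exists>x\<in>OK D. b1 + of_nat y * b2 = a j * x^2)}" for j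
  have zOK: "b1 + of_nat y * b2 \<in> OK D" for y :: nat
    using b OK_int[of "int y"] by (simp add: OK_add OK_mult)
  have zpos: "b1 + of_nat y * b2 > 0" for y :: nat
    using b by (simp add: add_pos_nonneg)
  have cover: "{..N} \<subseteq> (\<Union>j\<in>{..<m}. Y j)"
  proof
    fix y assume y: "y \<in> {..N}"
    have "totally_positive D (b1 + of_nat y * b2)"
      unfolding tp_iff using zOK zpos cpos y by auto
    then obtain x where x: "\<forall>i<m. x i \<in> OK D" and xs: "b1 + of_nat y * b2 = (\<Sum>i<m. a i * (x i)^2)"
      using univ zOK unfolding universal_diag_form_def by blast
    have "b1 + of_nat y * b2 = b1 + of_int (int y) * b2" by simp
    from indecomp[OF gb aprop x this xs zpos[of y]]
    obtain j where "j < m" "b1 + of_nat y * b2 = a j * (x j)^2" by auto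
    then show "y \<in> (\<Union>j\<in>{..<m}. Y j)" using x y unfolding Y_def by auto
  qed
  have Yfin: "finite (Y j)" for j unfolding Y_def by simp
  have Y2: "card (Y j) \<le> 2" if j: "j < m" for j
  proof (cases "Y j = {}")
    case True then show ?thesis by simp
  next
    case False
    then obtain y0 where y0: "y0 \<in> Y j" by blast
    have "card (Y j - {y0}) \<le> Suc 0"
    proof (subst card_le_Suc0_iff_eq)
      show "finite (Y j - {y0})" using Yfin by simp
      show "\<forall>a1\<in>Y j - {y0}. \<forall>a2\<in>Y j - {y0}. a1 = a2"
      proof (intro ballI)
        fix y1 y2 assume y1: "y1 \<in> Y j - {y0}" and y2: "y2 \<in> Y j - {y0}"
        have key: "of_int (int y + int y0) = - (b1 / b2 + cj b1 / cj b2)"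
          if yy: "y \<in> Y j - {y0}" for y
        proof -
          from yy y0 obtain x v where xv: "x \<in> OK D" "v \<in> OK D"
            "b1 + of_nat y * b2 = a j * x^2" "b1 + of_nat y0 * b2 = a j * v^2"
            "y \<noteq> y0" "y \<le> N" "y0 \<le> N"
            unfolding Y_def by auto
          have aOK: "a j \<in> OK D" using aprop j by simp
          have c1: "cj (b1 + of_int (int y) * b2) > 0" using cpos xv(6) by simp
          have c2: "cj (b1 + of_int (int y0) * b2) > 0" using cpos xv(7) by simp
          show ?thesis
            using pair_sum[OF gb aOK xv(1,2), of "int y" "int y0"] xv(3,4,5) zpos[of y] zpos[of y0] c1 c2
            by simp
        qed
        from key[OF y1] key[OF y2] show "y1 = y2" by simp
      qed
    qed
    moreover have "card (Y j) = card (Y j - {y0}) + 1"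
      using y0 Yfin card_Diff_singleton[OF y0] by (metis Suc_eq_plus1 card_Suc_Diff1)
    ultimately show ?thesis by simp
  qed
  have "N + 1 = card {..N}" by simp
  also have "\<dots> \<le> card (\<Union>j\<in>{..<m}. Y j)"
    by (rule card_mono) (use cover Yfin in auto)
  also have "\<dots> \<le> (\<Sum>j<m. card (Y j))" by (rule card_UN_le) simp
  also have "\<dots> \<le> (\<Sum>j<m. 2)" by (rule sum_mono) (use Y2 in auto)
  also have "\<dots> = 2 * m" by simp
  finally show ?thesis .
qed


end

fun PP :: "nat \<Rightarrow> nat \<Rightarrow> int" where
  "PP D 0 = 1"
| "PP D (Suc 0) = u D 0"
| "PP D (Suc (Suc k)) = u D (Suc k) * PP D (Suc k) + PP D k"

fun QQ :: "nat \<Rightarrow> nat \<Rightarrow> int" where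
  "QQ D 0 = 0"
| "QQ D (Suc 0) = 1"
| "QQ D (Suc (Suc k)) = u D (Suc k) * QQ D (Suc k) + QQ D k"

declare cf_rem.simps(2)[simp del]

context qf begin

abbreviation "xi n \<equiv> cf_rem w n"

lemma u_eq: "u D n = \<lfloor>xi n\<rfloor>" by (simp add: u_def cf_def)

lemma xi_Suc: "xi (Suc n) = 1 / (xi n - of_int (u D n))"
  by (simp add: frac_def u_eq cf_rem.simps)

lemma xi_irr: "xi n \<notin> \<rat>"
proof (induction n)
  case 0 then show ?case using omega_irr[OF D1 sqf] by simp
next
  case (Suc n)
  show ?case
  proof
    assume h: "xi (Suc n) \<in> \<rat>"
    show False
    proof (cases "xi n - of_int (u D n) = 0")
      case True
      then have "xi n = of_int (u D n)" by simp
      then have "xi n \<in> \<rat>" by simp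
      with Suc show False by simp
    next
      case False
      then have "xi n = of_int (u D n) + 1 / xi (Suc n)"
        by (simp only: xi_Suc) (simp add: field_simps)
      also have "\<dots> \<in> \<rat>" using h by simp
      finally show False using Suc by simp
    qed
  qed
qed

lemma frac_bounds: "0 < xi n - of_int (u D n)" "xi n - of_int (u D n) < 1"
proof -
  have "xi n \<noteq> of_int (u D n)" using xi_irr[of n] by (metis Rats_of_int)
  moreover have "of_int (u D n) \<le> xi n" unfolding u_eq by (rule of_int_floor_le)
  ultimately show "0 < xi n - of_int (u D n)" by simp
  show "xi n - of_int (u D n) < 1" unfolding u_eq by linarith
qed

lemma xi_rec: "xi (Suc n) * (xi n - of_int (u D n)) = 1"
  using frac_bounds(1)[of n] by (simp only: xi_Suc) simp

lemma xi_gt1: "xi (Suc n) > 1"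
  using frac_bounds[of n] by (simp only: xi_Suc) simp

lemma u_lt: "of_int (u D n) < xi n"
  using frac_bounds(1)[of n] by simp

lemma u_pos: "u D n \<ge> 1"
proof (cases n)
  case 0
  then have "u D n = \<lfloor>w\<rfloor>" by (simp add: u_eq)
  then show ?thesis using omega_gt1[OF D1] by simp
next
  case (Suc k)
  then show ?thesis using xi_gt1[of k] by (simp add: u_eq)
qed

definition Cv :: "nat \<Rightarrow> real" where "Cv k = of_int (PP D k) - of_int (QQ D k) * w"
definition Av :: "nat \<Rightarrow> real" where "Av k = of_int (PP D k) - of_int (QQ D k) * w'"

lemma Cv_rec2: "Cv (Suc (Suc k)) = of_int (u D (Suc k)) * Cv (Suc k) + Cv k"
  by (simp add: Cv_def algebra_simps)

lemma Av_rec2: "Av (Suc (Suc k)) = of_int (u D (Suc k)) * Av (Suc k) + Av k"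
  by (simp add: Av_def algebra_simps)

lemma Cv_step: "Cv (Suc k) * xi (Suc k) = - Cv k"
proof (induction k)
  case 0
  have "Cv 1 = of_int (u D 0) - w" by (simp add: Cv_def)
  moreover have "xi 1 * (w - of_int (u D 0)) = 1" using xi_rec[of 0] by simp
  ultimately show ?case by (simp add: Cv_def algebra_simps)
next
  case (Suc k)
  have "Cv (Suc (Suc k)) = - Cv (Suc k) * (xi (Suc k) - of_int (u D (Suc k)))"
    using Cv_rec2[of k] Suc by (simp add: algebra_simps)
  then have "Cv (Suc (Suc k)) * xi (Suc (Suc k)) = - Cv (Suc k) * (xi (Suc (Suc k)) * (xi (Suc k) - of_int (u D (Suc k))))"
    by (simp only: mult.assoc mult.commute) (simp only: ac_simps)
  also have "\<dots> = - Cv (Suc k)" using xi_rec[of "Suc k"] by simp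
  finally show ?case .
qed

lemma Cv_sign: "(even k \<longrightarrow> Cv k > 0) \<and> (odd k \<longrightarrow> Cv k < 0)"
proof (induction k)
  case 0 then show ?case by (simp add: Cv_def)
next
  case (Suc k)
  have x: "xi (Suc k) > 0" using xi_gt1[of k] by simp
  have "Cv (Suc k) = - Cv k / xi (Suc k)" using Cv_step[of k] x by (simp add: field_simps)
  then show ?case using Suc x by (auto simp: divide_pos_pos divide_neg_pos)
qed

lemma PQ_pos: "PP D k \<ge> 1 \<and> QQ D k \<ge> 0"
proof (induction k rule: nat_less_induct)
  case (1 n)
  show ?case
  proof (cases n)
    case 0 then show ?thesis by simp
  next
    case (Suc k)
    show ?thesis
    proof (cases k)
      case 0 then show ?thesis using Suc u_pos[of 0] by simp
    next
      case (Suc j)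
      have ih1: "PP D (Suc j) \<ge> 1 \<and> QQ D (Suc j) \<ge> 0" using 1 \<open>n = Suc k\<close> Suc by simp
      have ih2: "PP D j \<ge> 1 \<and> QQ D j \<ge> 0" using 1 \<open>n = Suc k\<close> Suc by simp
      have up: "u D (Suc j) \<ge> 1" by (rule u_pos)
      have "u D (Suc j) * PP D (Suc j) \<ge> 1 * 1" using ih1 up by (intro mult_mono) auto
      moreover have "u D (Suc j) * QQ D (Suc j) \<ge> 0" using ih1 up by simp
      ultimately show ?thesis using \<open>n = Suc k\<close> Suc ih2 by simp
    qed
  qed
qed

lemma Av_pos: "Av k > 0"
proof -
  have "of_int (QQ D k) * w' \<le> 0" using PQ_pos[of k] omegac_neg[OF D1]
    by (simp add: mult_nonneg_nonpos)
  moreover have "of_int (PP D k) \<ge> (1::real)" using PQ_pos[of k] by simp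
  ultimately show ?thesis by (simp add: Av_def)
qed

lemma wc: "omega_conj D = of_int (cc D) - omega D"
  using om_sum[of D] by simp

lemma Av_form: "Av k = of_int (PP D k - cc D * QQ D k) + of_int (QQ D k) * w"
  unfolding Av_def wc by (simp add: algebra_simps)

lemma Av_OK: "Av k \<in> OK D"
  unfolding OK_iff Av_form by blast

lemma cj_Av: "cj (Av k) = Cv k"
  unfolding Av_form cj_eq wc by (simp add: Cv_def algebra_simps)

lemma det: "PP D k * QQ D (Suc k) - PP D (Suc k) * QQ D k = (-1)^k"
proof (induction k)
  case 0 then show ?case by simp
next
  case (Suc k)
  have "PP D (Suc k) * QQ D (Suc (Suc k)) - PP D (Suc (Suc k)) * QQ D (Suc k)
       = - (PP D k * QQ D (Suc k) - PP D (Suc k) * QQ D k)"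
    by (simp add: algebra_simps)
  then show ?case using Suc by simp
qed

lemma Av_basis: assumes "z \<in> OK D" shows "\<exists>x y. z = of_int x * Av k + of_int y * Av (Suc k)"
proof -
  obtain a b where z: "z = of_int a + of_int b * w" using assms by (meson OKE)
  define p1 where "p1 = PP D k - cc D * QQ D k"
  define q1 where "q1 = QQ D k"
  define p2 where "p2 = PP D (Suc k) - cc D * QQ D (Suc k)"
  define q2 where "q2 = QQ D (Suc k)"
  define d :: int where "d = (-1)^k"
  have dd: "d * d = 1" by (simp add: d_def flip: power_add)
  have det': "p1 * q2 - p2 * q1 = d" using det[of k] by (simp add: p1_def p2_def q1_def q2_def d_def algebra_simps)
  define x where "x = d * (a * q2 - b * p2)"
  define y where "y = d * (b * p1 - a * q1)"
  have e1: "x * p1 + y * p2 = a"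
  proof -
    have "x * p1 + y * p2 = d * a * (p1 * q2 - p2 * q1)" by (simp add: x_def y_def algebra_simps)
    also have "\<dots> = a" using det' dd by (simp add: algebra_simps)
    finally show ?thesis .
  qed
  have e2: "x * q1 + y * q2 = b"
  proof -
    have "x * q1 + y * q2 = d * b * (p1 * q2 - p2 * q1)" by (simp add: x_def y_def algebra_simps)
    also have "\<dots> = b" using det' dd by (simp add: algebra_simps)
    finally show ?thesis .
  qed
  have "of_int x * Av k + of_int y * Av (Suc k) = of_int (x * p1 + y * p2) + of_int (x * q1 + y * q2) * w"
    unfolding Av_form p1_def p2_def q1_def q2_def by (simp add: algebra_simps)
  also have "\<dots> = z" using e1 e2 z by simp
  finally show ?thesis by metis
qed

lemma key_bound:
  fixes m :: nat and a :: "nat \<Rightarrow> real"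
  assumes univ: "universal_diag_form D m a" and k: "even k"
  shows "u D (Suc k) + 1 \<le> 2 * int m"
proof -
  have gb: "good_basis (Av k) (Av (Suc k))"
    unfolding good_basis_def using Av_OK Av_pos cj_Av Cv_sign[of k] Cv_sign[of "Suc k"] k Av_basis
    by auto
  have x: "xi (Suc k) > 0" using xi_gt1[of k] by simp
  have cpos: "\<forall>y\<le>nat (u D (Suc k)). cj (Av k + of_nat y * Av (Suc k)) > 0"
  proof (intro allI impI)
    fix y :: nat assume y: "y \<le> nat (u D (Suc k))"
    have "cj (Av k + of_nat y * Av (Suc k)) = Cv k + of_nat y * Cv (Suc k)"
      using cj_lin[OF Av_OK Av_OK, of 1 k "int y" "Suc k"] by (simp add: cj_Av)
    also have "\<dots> = Cv k * (1 - of_nat y / xi (Suc k))"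
      using Cv_step[of k] x by (simp add: field_simps)
    also have "\<dots> > 0"
    proof -
      have "real y \<le> of_int (u D (Suc k))" using y u_pos[of "Suc k"] by linarith
      then have "real y < xi (Suc k)" using u_lt[of "Suc k"] by linarith
      then have "of_nat y / xi (Suc k) < 1" using x by simp
      then show ?thesis using Cv_sign[of k] k by simp
    qed
    finally show "cj (Av k + of_nat y * Av (Suc k)) > 0" .
  qed
  from family_bound[OF gb univ cpos] have "nat (u D (Suc k)) + 1 \<le> 2 * m" .
  then show ?thesis using u_pos[of "Suc k"] by linarith
qed


abbreviation "rD \<equiv> sqrt (real D)"

lemma rD_sq: "rD * rD = real D" by simp

lemma rD_irr: "rD \<notin> \<rat>" using sqrtD_irr[OF D1 sqf] .

definition sval :: "int \<times> int \<Rightarrow> real" where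
  "sval st = (of_int (fst st) + rD) / of_int (snd st)"
definition scv :: "int \<times> int \<Rightarrow> real" where
  "scv st = (of_int (fst st) - rD) / of_int (snd st)"
definition stp :: "int \<times> int \<Rightarrow> int \<times> int" where
  "stp st = (let a = \<lfloor>sval st\<rfloor>; P1 = a * snd st - fst st in (P1, (int D - P1^2) div snd st))"
definition sinv :: "int \<times> int \<Rightarrow> bool" where
  "sinv st \<longleftrightarrow> snd st \<noteq> 0 \<and> snd st dvd (int D - (fst st)^2)"
definition sred :: "int \<times> int \<Rightarrow> bool" where
  "sred st \<longleftrightarrow> sval st > 1 \<and> -1 < scv st \<and> scv st < 0"

lemma rD_plus_ne: "of_int p + rD \<noteq> 0" and rD_minus_ne: "rD - of_int p \<noteq> 0"
proof -
  show "of_int p + rD \<noteq> 0"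
  proof
    assume "of_int p + rD = 0" then have "rD = - of_int p" by simp
    then have "rD \<in> \<rat>" by simp
    with rD_irr show False by simp
  qed
  show "rD - of_int p \<noteq> 0"
  proof
    assume "rD - of_int p = 0" then have "rD = of_int p" by simp
    then have "rD \<in> \<rat>" by simp
    with rD_irr show False by simp
  qed
qed

lemma sval_irr: "snd st \<noteq> 0 \<Longrightarrow> sval st \<notin> \<rat>"
proof
  assume q: "snd st \<noteq> 0" and h: "sval st \<in> \<rat>"
  have "rD = sval st * of_int (snd st) - of_int (fst st)" using q by (simp add: sval_def)
  also have "\<dots> \<in> \<rat>" using h by simp
  finally show False using rD_irr by simp
qed

lemma step_props:
  assumes inv: "sinv st" and red: "sred st"
  shows "sinv (stp st)" "sred (stp st)"
    "sval (stp st) * (sval st - of_int \<lfloor>sval st\<rfloor>) = 1"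
    "scv (stp st) * (scv st - of_int \<lfloor>sval st\<rfloor>) = 1"
proof -
  obtain P Q where st: "st = (P, Q)" by (cases st)
  define a where "a = \<lfloor>sval st\<rfloor>"
  define P1 where "P1 = a * Q - P"
  define Q1 where "Q1 = (int D - P1^2) div Q"
  have stp_eq: "stp st = (P1, Q1)" by (simp add: stp_def Let_def st a_def P1_def Q1_def)
  have Q0: "Q \<noteq> 0" and Qd: "Q dvd (int D - P^2)" using inv st by (auto simp: sinv_def)
  have "int D - P1^2 = (int D - P^2) - Q * (a^2 * Q - 2 * a * P)"
    by (simp add: P1_def power2_eq_square algebra_simps)
  then have Qd1: "Q dvd (int D - P1^2)" using Qd by (metis dvd_diff dvd_triv_left)
  then have QQ1: "Q * Q1 = int D - P1^2" by (simp add: Q1_def)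
  have DP1: "real D - (of_int P1)^2 \<noteq> 0"
  proof
    assume "real D - (of_int P1)^2 = 0"
    then have "rD * rD = of_int P1 * of_int P1" by (simp add: power2_eq_square)
    then have "(rD - of_int P1) * (rD + of_int P1) = 0" by (simp add: algebra_simps)
    then show False using rD_minus_ne[of P1] rD_plus_ne[of P1] by (simp add: add.commute)
  qed
  have QQ1r: "of_int Q * of_int Q1 = real D - (of_int P1)^2"
    using arg_cong[OF QQ1, of real_of_int] by simp
  have Q10: "Q1 \<noteq> 0" using QQ1r DP1 by auto
  show "sinv (stp st)" unfolding stp_eq sinv_def using Q10 QQ1 by (simp add: dvd_def) (metis mult.commute)
  have sv: "sval st = (of_int P + rD) / of_int Q" by (simp add: sval_def st)
  have cv: "scv st = (of_int P - rD) / of_int Q" by (simp add: scv_def st)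
  have sv1: "sval (stp st) = (of_int P1 + rD) / of_int Q1" by (simp add: sval_def stp_eq)
  have cv1: "scv (stp st) = (of_int P1 - rD) / of_int Q1" by (simp add: scv_def stp_eq)
  have fact1: "(of_int P1 + rD) * (rD - of_int P1) = of_int Q * of_int Q1"
    using QQ1r by (simp add: power2_eq_square algebra_simps)
  have e1: "sval st - of_int a = (rD - of_int P1) / of_int Q"
    using Q0 by (simp add: sv P1_def field_simps)
  have e2: "scv st - of_int a = - (rD + of_int P1) / of_int Q"
    using Q0 by (simp add: cv P1_def field_simps)
  show r1: "sval (stp st) * (sval st - of_int \<lfloor>sval st\<rfloor>) = 1"
    unfolding a_def[symmetric] e1 sv1 using Q0 Q10 fact1 by (simp add: field_simps)
  show r2: "scv (stp st) * (scv st - of_int \<lfloor>sval st\<rfloor>) = 1"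
  proof -
    have "scv (stp st) * (scv st - of_int a) = - ((of_int P1 - rD) * (rD + of_int P1)) / (of_int Q1 * of_int Q)"
      unfolding e2 cv1 by (simp add: field_simps)
    also have "\<dots> = 1" using fact1 Q0 Q10 by (simp add: algebra_simps)
    finally show ?thesis by (simp add: a_def)
  qed
  show "sred (stp st)"
  proof -
    have f0: "sval st - of_int a > 0"
    proof -
      have "sval st \<noteq> of_int a" using sval_irr[of st] Q0 st by (metis Rats_of_int snd_conv)
      moreover have "of_int a \<le> sval st" unfolding a_def by (rule of_int_floor_le)
      ultimately show ?thesis by simp
    qed
    have f1: "sval st - of_int a < 1" unfolding a_def by linarith
    have "sval (stp st) = 1 / (sval st - of_int a)" using r1 f0 unfolding a_def[symmetric] by (simp add: field_simps)
    then have g1: "sval (stp st) > 1" using f0 f1 by simp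
    have a1: "a \<ge> 1" using red unfolding sred_def a_def by linarith
    define t where "t = scv st - of_int a"
    have t1: "t < -1" using red a1 unfolding sred_def t_def by linarith
    have s1: "scv (stp st) = 1 / t" using r2 t1 unfolding a_def[symmetric] t_def[symmetric]
      by (simp add: field_simps)
    define v where "v = - t"
    have v1: "v > 1" using t1 by (simp add: v_def)
    have s2: "1 / t = - (1 / v)" by (simp add: v_def)
    have "0 < 1 / v" "1 / v < 1" using v1 by simp_all
    then have "-1 < scv (stp st) \<and> scv (stp st) < 0" using s1 s2 by linarith
    then show ?thesis using g1 unfolding sred_def by simp
  qed
qed


lemma rD_le: "rD \<le> real D"
proof -
  have "1 \<le> rD" using D1 by simp
  then have "rD * 1 \<le> rD * rD" by (intro mult_left_mono) auto
  then show ?thesis by simp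
qed

lemma rD_pos: "rD > 0" using D1 by simp

lemma red_bounds:
  assumes "sred st"
  shows "0 < fst st \<and> fst st \<le> int D \<and> 0 < snd st \<and> snd st \<le> 2 * int D"
proof -
  obtain P Q where st: "st = (P, Q)" by (cases st)
  have sv: "(of_int P + rD) / of_int Q > 1" and c1: "-1 < (of_int P - rD) / of_int Q"
    and c2: "(of_int P - rD) / of_int Q < 0"
    using assms by (auto simp: sred_def sval_def scv_def st)
  have Q0: "Q \<noteq> 0" using sv by auto
  have diff: "(of_int P + rD) / of_int Q - (of_int P - rD) / of_int Q = 2 * rD / of_int Q"
    using Q0 by (simp add: field_simps)
  have "2 * rD / of_int Q > 1" using sv c2 diff by linarith
  then have h21: "2 * rD / of_int Q > 1" .
  have Qp: "real_of_int Q > 0"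
  proof (rule ccontr)
    assume "\<not> real_of_int Q > 0"
    then have "2 * rD / of_int Q \<le> 0" using rD_pos by (simp add: divide_nonneg_nonpos)
    with h21 show False by simp
  qed
  have Ql: "real_of_int Q < 2 * rD" using h21 Qp by (simp add: less_divide_eq)
  have "(of_int P + rD) / of_int Q + (of_int P - rD) / of_int Q = 2 * of_int P / of_int Q"
    using Q0 by (simp add: field_simps)
  then have "2 * of_int P / of_int Q > (0::real)" using sv c1 by linarith
  then have Pp: "real_of_int P > 0" using Qp by (simp add: zero_less_divide_iff)
  have "of_int P - rD < 0" using c2 Qp by (simp add: divide_less_0_iff)
  then have Pl: "real_of_int P < real D" using rD_le by linarith
  show ?thesis using Qp Ql Pp Pl rD_le st by simp
qed

lemma step_inj:
  assumes i1: "sinv s1" "sred s1" and i2: "sinv s2" "sred s2" and e: "stp s1 = stp s2"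
  shows "s1 = s2"
proof -
  note p1 = step_props[OF i1] and p2 = step_props[OF i2]
  define a1 where "a1 = \<lfloor>sval s1\<rfloor>"
  define a2 where "a2 = \<lfloor>sval s2\<rfloor>"
  define c where "c = scv (stp s1)"
  have c0: "c \<noteq> 0" using p1(4) by (auto simp: c_def)
  have "scv s1 = of_int a1 + 1 / c" using p1(4) c0 by (simp add: c_def a1_def field_simps)
  moreover have "scv s2 = of_int a2 + 1 / c" using p2(4) c0 e by (simp add: c_def a2_def field_simps)
  moreover have "-1 < scv s1" "scv s1 < 0" "-1 < scv s2" "scv s2 < 0" using i1 i2 by (auto simp: sred_def)
  ultimately have "real_of_int a1 < of_int a2 + 1" "real_of_int a2 < of_int a1 + 1" by linarith+
  then have a: "a1 = a2" by linarith
  define g where "g = sval (stp s1)"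
  have g0: "g \<noteq> 0" using p1(3) by (auto simp: g_def)
  have sv1: "sval s1 = of_int a1 + 1 / g" using p1(3) g0 by (simp add: g_def a1_def field_simps)
  have sv2: "sval s2 = of_int a2 + 1 / g" using p2(3) g0 e by (simp add: g_def a2_def field_simps)
  have cv1: "scv s1 = scv s2" using \<open>scv s1 = _\<close> \<open>scv s2 = _\<close> a by simp
  have sv: "sval s1 = sval s2" using sv1 sv2 a by simp
  obtain P1 Q1 where s1: "s1 = (P1, Q1)" by (cases s1)
  obtain P2 Q2 where s2: "s2 = (P2, Q2)" by (cases s2)
  have Q1: "Q1 \<noteq> 0" and Q2: "Q2 \<noteq> 0" using i1 i2 s1 s2 by (auto simp: sinv_def)
  have "sval s1 - scv s1 = 2 * rD / of_int Q1" using Q1 by (simp add: s1 sval_def scv_def field_simps)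
  moreover have "sval s2 - scv s2 = 2 * rD / of_int Q2" using Q2 by (simp add: s2 sval_def scv_def field_simps)
  ultimately have "2 * rD / of_int Q1 = 2 * rD / of_int Q2" using sv cv1 by linarith
  then have "Q1 = Q2" using rD_pos Q1 Q2 D1 by (auto simp: field_simps)
  moreover have "sval s1 + scv s1 = 2 * of_int P1 / of_int Q1" using Q1 by (simp add: s1 sval_def scv_def field_simps)
  moreover have "sval s2 + scv s2 = 2 * of_int P2 / of_int Q2" using Q2 by (simp add: s2 sval_def scv_def field_simps)
  ultimately have "P1 = P2" using sv cv1 Q1 by (simp add: field_simps)
  then show ?thesis using \<open>Q1 = Q2\<close> s1 s2 by simp
qed


definition st0 :: "int \<times> int" where
  "st0 = (if D mod 4 = 1 then (2 * u D 0 - 1, 2) else (u D 0, 1))"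

lemma u0_eq: "u D 0 = \<lfloor>w\<rfloor>" by (simp add: u_eq)

lemma st0_vals: "sval st0 = w + of_int (u D 0) - of_int (cc D)" "scv st0 = of_int (u D 0) - w"
  by (auto simp: st0_def sval_def scv_def omega_def cc_def field_simps)

lemma st0_floor: "\<lfloor>sval st0\<rfloor> = 2 * u D 0 - cc D"
proof -
  have "\<lfloor>sval st0\<rfloor> = \<lfloor>w + of_int (u D 0 - cc D)\<rfloor>" by (simp add: st0_vals)
  also have "\<dots> = \<lfloor>w\<rfloor> + (u D 0 - cc D)" by (rule floor_add_int[symmetric])
  finally show ?thesis by (simp add: u0_eq)
qed

lemma st0_ok: "sinv st0" "sred st0"
proof -
  show "sinv st0"
  proof (cases "D mod 4 = 1")
    case True
    then have "odd (int D)" by presburger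
    then have "even (int D - (2 * u D 0 - 1)^2)" by simp
    then show ?thesis using True by (simp add: st0_def sinv_def)
  next
    case False then show ?thesis by (simp add: st0_def sinv_def)
  qed
  have cc1: "cc D \<le> 1" by (simp add: cc_def)
  show "sred st0" unfolding sred_def st0_vals
    using frac_bounds[of 0] omega_gt1[OF D1] u_pos[of 0] cc1 by simp
qed

definition sq :: "nat \<Rightarrow> int \<times> int" where "sq n = (stp ^^ n) st0"

lemma sq_Suc: "sq (Suc n) = stp (sq n)" by (simp add: sq_def)

lemma sq_ok: "sinv (sq n) \<and> sred (sq n)"
  by (induction n) (auto simp: sq_def st0_ok step_props)

lemma xi_sq: "xi (Suc n) = sval (sq (Suc n))"
proof (induction n)
  case 0
  have "sval (sq 1) * (w - of_int (u D 0)) = 1"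
    using step_props(3)[OF st0_ok] by (simp add: sq_def st0_floor st0_vals u0_eq)
  moreover have d: "w - of_int (u D 0) \<noteq> 0" using frac_bounds(1)[of 0] by simp
  ultimately have "sval (sq 1) = 1 / (w - of_int (u D 0))" by (simp add: eq_divide_eq)
  moreover have "xi 1 = 1 / (w - of_int (u D 0))" using xi_rec[of 0] d by (simp add: eq_divide_eq)
  ultimately show ?case by simp
next
  case (Suc n)
  have f: "u D (Suc n) = \<lfloor>sval (sq (Suc n))\<rfloor>" using Suc by (simp add: u_eq)
  have "sval (sq (Suc (Suc n))) * (sval (sq (Suc n)) - of_int (u D (Suc n))) = 1"
    using step_props(3)[of "sq (Suc n)"] sq_ok[of "Suc n"] f by (simp add: sq_Suc[of "Suc n"])
  moreover have d: "xi (Suc n) - of_int (u D (Suc n)) \<noteq> 0" using frac_bounds(1)[of "Suc n"] by simp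
  ultimately have "sval (sq (Suc (Suc n))) = 1 / (xi (Suc n) - of_int (u D (Suc n)))"
    using Suc by (simp add: eq_divide_eq)
  moreover have "xi (Suc (Suc n)) = 1 / (xi (Suc n) - of_int (u D (Suc n)))"
    using xi_rec[of "Suc n"] d by (simp add: eq_divide_eq)
  ultimately show ?case by simp
qed

lemma u_sq: "n \<ge> 1 \<Longrightarrow> u D n = \<lfloor>sval (sq n)\<rfloor>"
  using xi_sq[of "n - 1"] by (simp add: u_eq)

lemma sq_back: "sq (i + T) = sq i \<Longrightarrow> sq T = sq 0"
proof (induction i)
  case 0 then show ?case by simp
next
  case (Suc i)
  have "stp (sq (i + T)) = stp (sq i)" using Suc.prems by (simp add: sq_Suc[symmetric])
  then have "sq (i + T) = sq i" using step_inj sq_ok by blast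
  then show ?case using Suc.IH by simp
qed

lemma exists_period: "\<exists>T>0. (\<forall>n\<ge>1. u D (n + T) = u D n) \<and> u D T = 2 * u D 0 - cc D"
proof -
  define S where "S = {1..int D} \<times> {1..2 * int D}"
  have fin: "finite S" by (simp add: S_def)
  have "sq n \<in> S" for n
    using red_bounds[of "sq n"] sq_ok[of n] by (cases "sq n") (auto simp: S_def)
  then have "range sq \<subseteq> S" by auto
  then have "finite (range sq)" using fin finite_subset by auto
  then have "\<not> inj sq" using finite_imageD infinite_UNIV_nat by blast
  then obtain i j where ij: "i \<noteq> j" "sq i = sq j" unfolding inj_def by blast
  obtain i j where ij: "i < j" "sq i = sq j"
  proof (cases "i < j")
    case True then show ?thesis using that ij by blast
  next
    case False then show ?thesis using that[of j i] ij by simp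
  qed
  define T where "T = j - i"
  have T0: "T > 0" using ij by (simp add: T_def)
  have "sq (i + T) = sq i" using ij by (simp add: T_def)
  then have sT: "sq T = sq 0" by (rule sq_back)
  have per: "sq (n + T) = sq n" for n
    using sT by (simp add: sq_def funpow_add)
  have "\<forall>n\<ge>1. u D (n + T) = u D n" using per u_sq by simp
  moreover have "u D T = 2 * u D 0 - cc D"
    using u_sq[of T] T0 sT st0_floor by (simp add: sq_def)
  ultimately show ?thesis using T0 by blast
qed


definition isper :: "nat \<Rightarrow> bool" where
  "isper s \<longleftrightarrow> s > 0 \<and> (\<forall>n\<ge>1. u D (n + s) = u D n)"

lemma period_is: "period D = (LEAST s. isper s)"
  unfolding period_def isper_def by simp

lemma per_mult: "isper s \<Longrightarrow> n \<ge> 1 \<Longrightarrow> u D (n + k * s) = u D n"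
proof (induction k)
  case 0 then show ?case by simp
next
  case (Suc k)
  have "u D (n + Suc k * s) = u D ((n + k * s) + s)" by (simp add: algebra_simps)
  also have "\<dots> = u D (n + k * s)" using Suc.prems unfolding isper_def by simp
  finally show ?case using Suc by simp
qed

lemma period_facts:
  "period D > 0" "\<forall>n\<ge>1. u D (n + period D) = u D n" "u D (period D) = 2 * u D 0 - cc D"
proof -
  obtain T where T: "T > 0" "\<forall>n\<ge>1. u D (n + T) = u D n" "u D T = 2 * u D 0 - cc D"
    using exists_period by blast
  have pT: "isper T" using T unfolding isper_def by simp
  define s where "s = period D"
  have ps: "isper s" unfolding s_def period_is by (rule LeastI[of isper T, OF pT])
  then show "period D > 0" "\<forall>n\<ge>1. u D (n + period D) = u D n" unfolding isper_def s_def by auto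
  have s0: "s > 0" using ps isper_def by simp
  define r where "r = T mod s"
  define q where "q = T div s"
  have Tqr: "T = r + q * s" by (simp add: r_def q_def)
  have r0: "r = 0"
  proof (rule ccontr)
    assume "r \<noteq> 0"
    have "isper r"
      unfolding isper_def
    proof (intro conjI allI impI)
      show "r > 0" using \<open>r \<noteq> 0\<close> by simp
      fix n :: nat assume n: "n \<ge> 1"
      have "u D (n + r) = u D (n + r + q * s)" using per_mult[OF ps, of "n + r" q] n by simp
      also have "\<dots> = u D (n + T)" using Tqr by (simp add: algebra_simps)
      also have "\<dots> = u D n" using T n by simp
      finally show "u D (n + r) = u D n" .
    qed
    moreover have "r < s" unfolding r_def using s0 by simp
    ultimately show False using not_less_Least[of r isper] unfolding s_def period_is by blast
  qed
  then have "q \<ge> 1" using Tqr T(1) by (cases q) auto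
  then have "T = s + (q - 1) * s" using Tqr r0 by (cases q) auto
  then have "u D T = u D s" using per_mult[OF ps, of s "q - 1"] s0 by simp
  then show "u D (period D) = 2 * u D 0 - cc D" using T s_def by simp
qed

lemma all_bound:
  fixes m :: nat and a :: "nat \<Rightarrow> real"
  assumes univ: "universal_diag_form D m a" and n: "n \<ge> 1" and sodd: "odd (period D)"
  shows "u D n + 1 \<le> 2 * int m"
proof (cases "odd n")
  case True
  then have "n = Suc (n - 1)" "even (n - 1)" using n by auto
  then show ?thesis using key_bound[OF univ, of "n - 1"] by simp
next
  case False
  then have "odd (n + period D)" using sodd by simp
  then have e: "n + period D = Suc (n + period D - 1)" "even (n + period D - 1)" using n by auto
  have "u D n = u D (n + period D)" using period_facts(2) n by simp
  then show ?thesis using key_bound[OF univ e(2)] e(1) by simp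
qed

end

theorem main:
  fixes D m :: nat and a :: "nat \<Rightarrow> real"
  assumes "D > 1" and "squarefree D"
    and univ: "universal_diag_form D m a"
  shows "(even (period D) \<longrightarrow> real m \<ge> real_of_int (M D) / real (period D)) \<and>
         (odd (period D) \<longrightarrow> real m \<ge> real_of_int (M D) / (2 * real (period D)))"
proof -
  interpret qf D using assms(1,2) by unfold_locales
  define s where "s = period D"
  show ?thesis
  proof (intro conjI impI)
    assume ev: "even (period D)"
    have Ms: "M D = (\<Sum>j<s div 2. u D (2 * j + 1))" using ev by (simp add: M_def s_def Let_def)
    have "M D \<le> (\<Sum>j<s div 2. 2 * int m - 1)"
    proof (unfold Ms, rule sum_mono)
      fix j assume "j \<in> {..<s div 2}"
      have "even (2 * j)" by simp
      from key_bound[OF univ this] show "u D (2 * j + 1) \<le> 2 * int m - 1" by simp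
    qed
    also have "\<dots> = int (s div 2) * (2 * int m - 1)" by simp
    also have "\<dots> \<le> int (s div 2) * (2 * int m)" by (simp add: mult_left_mono)
    also have "\<dots> = int (2 * (s div 2)) * int m" by simp
    also have "2 * (s div 2) = s" using ev by (simp add: s_def)
    finally have "real_of_int (M D) \<le> real_of_int (int s * int m)" by (simp only: of_int_le_iff)
    then have "real_of_int (M D) \<le> real s * real m" by simp
    then show "real m \<ge> real_of_int (M D) / real (period D)"
      unfolding s_def[symmetric] by (cases "s = 0") (simp_all add: divide_le_eq mult.commute)
  next
    assume od: "odd (period D)"
    have s0: "s > 0" using od s_def by (cases s) auto
    have us: "u D s = 2 * u D 0 - cc D" using period_facts(3) s_def by simp
    have "M D = u D s + (\<Sum>i\<in>{1..<s}. u D i)"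
      using od us by (simp add: M_def s_def Let_def cc_def)
    also have "\<dots> = (\<Sum>i\<in>{1..s}. u D i)"
    proof -
      have "{1..s} = insert s {1..<s}" using s0 by auto
      then show ?thesis by simp
    qed
    also have "\<dots> \<le> (\<Sum>i\<in>{1..s}. 2 * int m - 1)"
      by (rule sum_mono) (use all_bound[OF univ _ od] s_def in force)
    also have "\<dots> = int s * (2 * int m - 1)" by simp
    also have "\<dots> \<le> 2 * int s * int m" by (simp add: algebra_simps)
    finally have "real_of_int (M D) \<le> real_of_int (2 * int s * int m)" by (simp only: of_int_le_iff)
    then have "real_of_int (M D) \<le> 2 * real s * real m" by simp
    then show "real m \<ge> real_of_int (M D) / (2 * real (period D))"
      unfolding s_def[symmetric] using s0 by (simp add: divide_le_eq mult.commute)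
  qed
qed


theorem theorem12:
  fixes D m :: nat and a :: "nat \<Rightarrow> real"
  assumes "D > 1" and "squarefree D"
    and "universal_diag_form D m a"
  shows "(even (period D) \<longrightarrow> real m \<ge> real_of_int (M D) / real (period D)) \<and>
         (odd (period D) \<longrightarrow> real m \<ge> real_of_int (M D) / (2 * real (period D)))"
  using main[OF assms] .

end
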